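(* Let $X$ be a compact Hausdorff space, $Y$ a normed linear space over $\mathbb{R}$ with norm $\|\cdot\|$, and $C(X,Y)$ the space of continuous functions $X\to Y$ equipped with the uniform norm $|||f||| = \max_{x\in X}\|f(x)\|$. Let $H\subset C(X,Y)$ be a linear subspace of finite dimension $n\ge 1$. Let $A$ be a compact Hausdorff topological space and $\{f_a\}_{a\in A}\subset C(X,Y)$ a family such that the map $A\to C(X,Y)$, $a\mapsto f_a$, is continuous (with respect to the uniform norm). Then $f^*\in H$ is a best simultaneous approximation to $\{f_a\}_{a\in A}$ from $H$, i.e. $$\max_{a\in A}|||f_a-f^*|||\le \max_{a\in A}|||f_a-f|||\quad\text{for all } f\in H,$$ if and only if there exist an integer $k$ with $1\le k\le n+1$, elements $a_1,\dots,a_k\in A$, points $x_1,\dots,x_k\in X$, and positive numbers $\lambda_1,\dots,\lambda_k$ with $\sum_{i=1}^k\lambda_i=1$ such that (i) $\sum_{i=1}^k\lambda_i\|f_{a_i}(x_i)-f^*(x_i)\|\le \sum_{i=1}^k\lambda_i\|f_{a_i}(x_i)-f(x_i)\|$ for all $f\in H$; and (ii) $\|f_{a_i}(x_i)-f^*(x_i)\| = |||f_{a_i}-f^*||| = \max_{a\in A}|||f_a-f^*|||$ for all $i$ with $1\le i\le k$. *)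

theory Defs
  imports "HOL-Analysis.Analysis"
begin

end

theory Submission
  imports Defs "HOL-Analysis.Analysis"
begin


typedef fsq = "{f :: nat \<Rightarrow> real. finite {i. f i \<noteq> 0}}"
  morphisms cf Abs_fsq
  by (rule exI[of _ "\<lambda>_. 0"]) simp

setup_lifting type_definition_fsq

lemma fsq_eqI: "(\<And>i. cf x i = cf y i) \<Longrightarrow> x = y"
  by (metis cf_inject ext)

lemma finite_supp_cf: "finite {i. cf x i \<noteq> 0}"
  using cf by auto

instantiation fsq :: real_vector
begin
lift_definition zero_fsq :: fsq is "\<lambda>_. 0" by simp
lift_definition plus_fsq :: "fsq \<Rightarrow> fsq \<Rightarrow> fsq" is "\<lambda>f g i. f i + g i"
proof -
  fix f g :: "nat \<Rightarrow> real"
  assume "finite {i. f i \<noteq> 0}" "finite {i. g i \<noteq> 0}"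
  moreover have "{i. f i + g i \<noteq> 0} \<subseteq> {i. f i \<noteq> 0} \<union> {i. g i \<noteq> 0}" by auto
  ultimately show "finite {i. f i + g i \<noteq> 0}" by (meson finite_UnI finite_subset)
qed
lift_definition uminus_fsq :: "fsq \<Rightarrow> fsq" is "\<lambda>f i. - f i" by simp
lift_definition minus_fsq :: "fsq \<Rightarrow> fsq \<Rightarrow> fsq" is "\<lambda>f g i. f i - g i"
proof -
  fix f g :: "nat \<Rightarrow> real"
  assume "finite {i. f i \<noteq> 0}" "finite {i. g i \<noteq> 0}"
  moreover have "{i. f i - g i \<noteq> 0} \<subseteq> {i. f i \<noteq> 0} \<union> {i. g i \<noteq> 0}" by auto
  ultimately show "finite {i. f i - g i \<noteq> 0}" by (meson finite_UnI finite_subset)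
qed
lift_definition scaleR_fsq :: "real \<Rightarrow> fsq \<Rightarrow> fsq" is "\<lambda>c f i. c * f i"
proof -
  fix c f
  assume "finite {i. f i \<noteq> (0::real)}"
  moreover have "{i. c * f i \<noteq> 0} \<subseteq> {i. f i \<noteq> 0}" by auto
  ultimately show "finite {i. c * f i \<noteq> 0}" by (meson finite_subset)
qed
instance
  by standard (transfer; auto simp: algebra_simps fun_eq_iff)+
end

lemma cf_zero[simp]: "cf 0 i = 0" by transfer simp
lemma cf_add[simp]: "cf (x + y) i = cf x i + cf y i" by transfer simp
lemma cf_diff[simp]: "cf (x - y) i = cf x i - cf y i" by transfer simp
lemma cf_minus[simp]: "cf (- x) i = - cf x i" by transfer simp
lemma cf_scaleR[simp]: "cf (c *\<^sub>R x) i = c * cf x i" by transfer simp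
lemma cf_sum[simp]: "cf (sum g A) i = (\<Sum>a\<in>A. cf (g a) i)"
  by (induction A rule: infinite_finite_induct) auto

definition inner_fsq_def_aux: "inner_fsq_aux x y = (\<Sum>i\<in>{i. cf x i \<noteq> 0}. cf x i * cf y i)"

lemma inner_aux_eq:
  assumes "finite S" "{i. cf x i \<noteq> 0} \<subseteq> S"
  shows "inner_fsq_aux x y = (\<Sum>i\<in>S. cf x i * cf y i)"
  unfolding inner_fsq_def_aux
  by (rule sum.mono_neutral_left) (use assms in auto)

instantiation fsq :: real_inner
begin
definition inner_fsq :: "fsq \<Rightarrow> fsq \<Rightarrow> real" where "inner_fsq = inner_fsq_aux"
definition norm_fsq :: "fsq \<Rightarrow> real" where "norm_fsq x = sqrt (inner_fsq_aux x x)"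
definition sgn_fsq :: "fsq \<Rightarrow> fsq" where "sgn_fsq x = x /\<^sub>R norm x"
definition dist_fsq :: "fsq \<Rightarrow> fsq \<Rightarrow> real" where "dist_fsq x y = norm (x - y)"
definition uniformity_fsq :: "(fsq \<times> fsq) filter" where
  "uniformity_fsq = (INF e\<in>{0<..}. principal {(x, y). dist x y < e})"
definition open_fsq :: "fsq set \<Rightarrow> bool" where
  "open_fsq U = (\<forall>x\<in>U. \<forall>\<^sub>F (x', y) in uniformity. x' = x \<longrightarrow> y \<in> U)"
instance
proof
  fix x y z :: fsq and r :: real
  let ?S = "\<lambda>x. {i. cf x i \<noteq> 0}"
  have fin: "\<And>x. finite (?S x)" by (rule finite_supp_cf)
  show "inner x y = inner y x"
    unfolding inner_fsq_def
    using inner_aux_eq[of "?S x \<union> ?S y" x y] inner_aux_eq[of "?S x \<union> ?S y" y x] fin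
    by (auto simp: mult.commute)
  show "inner (x + y) z = inner x z + inner y z"
  proof -
    have sub: "?S (x+y) \<subseteq> ?S x \<union> ?S y" by auto
    show ?thesis unfolding inner_fsq_def
      using inner_aux_eq[of "?S x \<union> ?S y" "x+y" z] inner_aux_eq[of "?S x \<union> ?S y" x z]
        inner_aux_eq[of "?S x \<union> ?S y" y z] fin sub
      by (auto simp: distrib_right sum.distrib)
  qed
  show "inner (r *\<^sub>R x) y = r * inner x y"
  proof -
    have sub: "?S (r *\<^sub>R x) \<subseteq> ?S x" by auto
    show ?thesis unfolding inner_fsq_def
      using inner_aux_eq[of "?S x" "r *\<^sub>R x" y] inner_aux_eq[of "?S x" x y] fin sub
      by (auto simp: sum_distrib_left mult.assoc)
  qed
  show "0 \<le> inner x x"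
    unfolding inner_fsq_def inner_fsq_def_aux by (auto intro: sum_nonneg)
  show "inner x x = 0 \<longleftrightarrow> x = 0"
  proof
    assume "inner x x = 0"
    then have "(\<Sum>i\<in>?S x. cf x i * cf x i) = 0" unfolding inner_fsq_def inner_fsq_def_aux .
    then have "\<forall>i\<in>?S x. cf x i * cf x i = 0"
    proof -
      from sum_nonneg_eq_0_iff[OF fin[of x], of "\<lambda>i. cf x i * cf x i"] \<open>(\<Sum>i\<in>?S x. cf x i * cf x i) = 0\<close>
      show ?thesis by simp
    qed
    then show "x = 0" by (intro fsq_eqI) auto
  qed (simp add: inner_fsq_def inner_fsq_def_aux)
  show "norm x = sqrt (inner x x)" by (simp add: norm_fsq_def inner_fsq_def)
qed (simp_all add: sgn_fsq_def dist_fsq_def uniformity_fsq_def open_fsq_def)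
end

lemma inner_fsq_eq:
  assumes "finite S" "{i. cf x i \<noteq> 0} \<subseteq> S"
  shows "inner x y = (\<Sum>i\<in>S. cf x i * cf y i)"
  using inner_aux_eq[OF assms] by (simp add: inner_fsq_def)


lift_definition ev :: "nat \<Rightarrow> fsq" is "\<lambda>j i. if i = j then 1 else 0"
proof -
  fix j :: nat
  have "{i. (if i = j then 1 else 0::real) \<noteq> 0} = {j}" by auto
  then show "finite {i. (if i = j then 1 else 0::real) \<noteq> 0}" by simp
qed

lemma cf_ev[simp]: "cf (ev j) i = (if i = j then 1 else 0)"
  by transfer simp

definition Vn :: "nat \<Rightarrow> fsq set" where "Vn n = {v. \<forall>i\<ge>n. cf v i = 0}"

lemma Vn_supp: "v \<in> Vn n \<Longrightarrow> {i. cf v i \<noteq> 0} \<subseteq> {..<n}"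
  unfolding Vn_def by (auto simp: not_less[symmetric])

lemma inner_Vn: "v \<in> Vn n \<Longrightarrow> inner v w = (\<Sum>j<n. cf v j * cf w j)"
  by (rule inner_fsq_eq) (auto dest: Vn_supp)

lemma vec_expand: "v \<in> Vn n \<Longrightarrow> v = (\<Sum>j<n. cf v j *\<^sub>R ev j)"
proof (rule fsq_eqI)
  fix i assume v: "v \<in> Vn n"
  have "(\<Sum>j<n. cf v j * (if i = j then 1 else 0)) = (if i < n then cf v i else 0)"
    by (simp add: if_distrib[of "\<lambda>x. _ * x"] sum.delta cong: if_cong)
  also have "\<dots> = cf v i" using v unfolding Vn_def by auto
  finally show "cf v i = cf (\<Sum>j<n. cf v j *\<^sub>R ev j) i" by simp
qed

lemma abs_cf_le: "\<bar>cf v i\<bar> \<le> norm v"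
proof -
  let ?S = "insert i {i. cf v i \<noteq> 0}"
  have fin: "finite ?S" using finite_supp_cf by simp
  have "inner v v = (\<Sum>j\<in>?S. cf v j * cf v j)"
    by (rule inner_fsq_eq) (use fin in auto)
  also have "\<dots> \<ge> cf v i * cf v i"
    by (rule member_le_sum) (use fin in auto)
  finally have "(cf v i)\<^sup>2 \<le> (norm v)\<^sup>2"
    by (metis power2_eq_square power2_norm_eq_inner)
  then show ?thesis using abs_le_square_iff[of "cf v i" "norm v"] by simp
qed

lemma bounded_linear_cf: "bounded_linear (\<lambda>v. cf v i)"
proof
  show "cf (x + y) i = cf x i + cf y i" for x y by simp
  show "cf (r *\<^sub>R x) i = r *\<^sub>R cf x i" for r x by simp
  show "\<exists>K. \<forall>x. norm (cf x i) \<le> norm x * K"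
    by (rule exI[of _ 1]) (simp add: abs_cf_le)
qed

lemma continuous_on_cf[continuous_intros]:
  "continuous_on S g \<Longrightarrow> continuous_on S (\<lambda>x. cf (g x) i)"
  using bounded_linear.continuous_on[OF bounded_linear_cf] .

lemma closed_Vn: "closed (Vn n)"
proof -
  have "Vn n = (\<Inter>i\<in>{n..}. {v. cf v i = 0})" unfolding Vn_def by auto
  moreover have "closed {v. cf v i = 0}" for i
    by (rule closed_Collect_eq) (auto intro!: continuous_intros)
  ultimately show ?thesis by auto
qed

lemma subspace_Vn: "subspace (Vn n)"
  unfolding subspace_def Vn_def by auto

lemma ev_in_Vn: "j < n \<Longrightarrow> ev j \<in> Vn n"
  unfolding Vn_def by auto

lemma Vn_eq_span: "Vn n = span (ev ` {..<n})"
proof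
  show "Vn n \<subseteq> span (ev ` {..<n})"
  proof
    fix v assume "v \<in> Vn n"
    then have "v = (\<Sum>j<n. cf v j *\<^sub>R ev j)" by (rule vec_expand)
    also have "\<dots> \<in> span (ev ` {..<n})"
      by (intro span_sum span_scale span_base) auto
    finally show "v \<in> span (ev ` {..<n})" .
  qed
  show "span (ev ` {..<n}) \<subseteq> Vn n"
    by (rule span_minimal) (auto simp: subspace_Vn ev_in_Vn)
qed

lemma Vn_0: "Vn 0 = {0}"
  unfolding Vn_def by (auto intro: fsq_eqI)

lemma norm_le_Vn_Suc:
  assumes "v \<in> Vn (Suc n)"
  shows "v - cf v n *\<^sub>R ev n \<in> Vn n" "norm (v - cf v n *\<^sub>R ev n) \<le> norm v"
proof -
  let ?w = "v - cf v n *\<^sub>R ev n"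
  show w: "?w \<in> Vn n" using assms unfolding Vn_def by auto
  have "inner ?w ?w = (\<Sum>j<n. cf ?w j * cf ?w j)" using inner_Vn[OF w] .
  also have "\<dots> = (\<Sum>j<n. cf v j * cf v j)" by (intro sum.cong) auto
  also have "\<dots> \<le> (\<Sum>j<Suc n. cf v j * cf v j)" by simp
  also have "\<dots> = inner v v" using inner_Vn[OF assms] by simp
  finally show "norm ?w \<le> norm v" by (simp add: norm_eq_sqrt_inner)
qed

lemma compact_Vn_ball: "compact {v \<in> Vn n. norm v \<le> r}"
proof (induction n arbitrary: r)
  case 0
  have "{v \<in> Vn 0. norm v \<le> r} \<subseteq> {0}" by (auto simp: Vn_0)
  then have "finite {v \<in> Vn 0. norm v \<le> r}" by (rule finite_subset) simp
  then show ?case by (rule finite_imp_compact)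
next
  case (Suc n)
  let ?g = "\<lambda>(w::fsq, c::real). w + c *\<^sub>R ev n"
  have "compact (?g ` ({v \<in> Vn n. norm v \<le> r} \<times> {-r..r}))"
    by (intro compact_continuous_image compact_Times Suc.IH compact_Icc)
       (auto intro!: continuous_intros simp: case_prod_unfold)
  moreover have "closed {v \<in> Vn (Suc n). norm v \<le> r}"
  proof -
    have "{v \<in> Vn (Suc n). norm v \<le> r} = Vn (Suc n) \<inter> cball 0 r" by auto
    then show ?thesis using closed_Vn closed_cball by (metis closed_Int)
  qed
  moreover have "{v \<in> Vn (Suc n). norm v \<le> r} \<subseteq> ?g ` ({v \<in> Vn n. norm v \<le> r} \<times> {-r..r})"
  proof
    fix v assume v: "v \<in> {v \<in> Vn (Suc n). norm v \<le> r}"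
    then have "v - cf v n *\<^sub>R ev n \<in> {v \<in> Vn n. norm v \<le> r}"
      using norm_le_Vn_Suc[of v n] by force
    moreover have "cf v n \<in> {-r..r}" using abs_cf_le[of v n] v by auto
    ultimately show "v \<in> ?g ` ({v \<in> Vn n. norm v \<le> r} \<times> {-r..r})"
      by (intro image_eqI[of _ _ "(v - cf v n *\<^sub>R ev n, cf v n)"]) auto
  qed
  ultimately show ?case
    by (metis (no_types, lifting) compact_Int_closed inf.absorb_iff2)
qed

lemma Vn_indep_card:
  assumes "independent B" "B \<subseteq> Vn n"
  shows "finite B" "card B \<le> n"
proof -
  have "B \<subseteq> span (ev ` {..<n})" using assms Vn_eq_span by auto
  then have "finite B \<and> card B \<le> card (ev ` {..<n})"
    using independent_span_bound[of "ev ` {..<n}" B] assms by auto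
  moreover have "card (ev ` {..<n}) \<le> n" using card_image_le[of "{..<n}" ev] by simp
  ultimately show "finite B" "card B \<le> n" by auto
qed



lemma sep_compact_0:
  fixes C :: "'a::real_inner set"
  assumes "compact C" "convex C" "C \<noteq> {}"
  shows "\<exists>y\<in>C. \<forall>x\<in>C. inner y x \<ge> inner y y"
proof -
  obtain y where y: "y \<in> C" and ymin: "\<And>z. z \<in> C \<Longrightarrow> norm y \<le> norm z"
    using continuous_attains_inf[OF assms(1,3) continuous_on_norm_id] by blast
  have "inner y x \<ge> inner y y" if x: "x \<in> C" for x
  proof (rule ccontr)
    assume nt: "\<not> inner y x \<ge> inner y y"
    define d where "d = inner y (x - y)"
    define q where "q = inner (x - y) (x - y)"
    have d: "d < 0" using nt by (simp add: d_def inner_diff_right)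
    then have "x \<noteq> y" by (auto simp: d_def)
    then have q: "q > 0" by (simp add: q_def)
    define u where "u = min 1 (- d / q)"
    have u: "0 < u" "u \<le> 1" "u * q \<le> - d"
      using d q by (auto simp: u_def min_def field_simps)
    have "y + u *\<^sub>R (x - y) \<in> C"
    proof -
      have "(1 - u) *\<^sub>R y + u *\<^sub>R x \<in> C" using assms(2) y x u by (intro convexD) auto
      moreover have "(1 - u) *\<^sub>R y + u *\<^sub>R x = y + u *\<^sub>R (x - y)" by (simp add: algebra_simps)
      ultimately show ?thesis by simp
    qed
    then have "norm y \<le> norm (y + u *\<^sub>R (x - y))" by (rule ymin)
    then have "inner y y \<le> inner (y + u *\<^sub>R (x - y)) (y + u *\<^sub>R (x - y))"
      by (simp add: norm_eq_sqrt_inner)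
    also have "\<dots> = inner y y + 2 * u * d + u * u * q"
    proof -
      define z where "z = x - y"
      have "inner (y + u *\<^sub>R z) (y + u *\<^sub>R z) = inner y y + u * inner y z + u * inner z y + u * u * inner z z"
        by (simp add: inner_add_left inner_add_right distrib_left)
      moreover have "inner z y = inner y z" by (rule inner_commute)
      ultimately show ?thesis by (simp add: d_def q_def z_def)
    qed
    finally have "0 \<le> u * (2 * d + u * q)" by (simp add: algebra_simps)
    then have "0 \<le> 2 * d + u * q" using u by (simp add: zero_le_mult_iff)
    then show False using u d by linarith
  qed
  then show ?thesis using y by blast
qed

lemma sep_nonstrict:
  fixes S W :: "'a::real_inner set"
  assumes "convex S" "0 \<notin> S" "S \<subseteq> W" "compact {x\<in>W. norm x = 1}" "w0 \<in> W" "w0 \<noteq> 0"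
    and W: "\<And>x c. x \<in> W \<Longrightarrow> c *\<^sub>R x \<in> W"
  shows "\<exists>a\<in>W. a \<noteq> 0 \<and> (\<forall>x\<in>S. inner a x \<ge> 0)"
proof -
  let ?Sp = "{x\<in>W. norm x = 1}"
  let ?k = "\<lambda>x. {a. 0 \<le> inner a x}"
  have "?Sp \<inter> (\<Inter>x\<in>S. ?k x) \<noteq> {}"
  proof (rule compact_imp_fip_image[OF assms(4)])
    show "closed (?k x)" for x
      by (rule closed_Collect_le) (auto intro!: continuous_intros)
    fix I assume I: "finite I" "I \<subseteq> S"
    show "?Sp \<inter> (\<Inter>x\<in>I. ?k x) \<noteq> {}"
    proof (cases "I = {}")
      case True
      have "w0 /\<^sub>R norm w0 \<in> ?Sp" using assms(5,6) W by auto
      then show ?thesis using True by auto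
    next
      case False
      have "convex hull I \<subseteq> S" using I assms(1) by (simp add: hull_minimal)
      obtain y where y: "y \<in> convex hull I" and yx: "\<forall>x\<in>convex hull I. inner y x \<ge> inner y y"
        using sep_compact_0[OF finite_imp_compact_convex_hull[OF I(1)] convex_convex_hull] False
        by auto
      have yS: "y \<in> S" using y \<open>convex hull I \<subseteq> S\<close> by auto
      then have "y \<noteq> 0" using assms(2) by auto
      have "y /\<^sub>R norm y \<in> ?Sp" using yS assms(3) W \<open>y \<noteq> 0\<close> by auto
      moreover have "y /\<^sub>R norm y \<in> ?k x" if "x \<in> I" for x
      proof -
        have "inner y x \<ge> inner y y" using yx that hull_subset[of I convex] by auto
        then have "inner y x \<ge> 0" by (meson inner_ge_zero order_trans)
        then show ?thesis by simp
      qed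
      ultimately show ?thesis by blast
    qed
  qed
  then obtain a where "a \<in> ?Sp" "\<forall>x\<in>S. 0 \<le> inner a x" by auto
  then show ?thesis by (intro bexI[of _ a]) auto
qed

lemma subgrad_exists:
  fixes \<phi> :: "fsq \<Rightarrow> real"
  assumes cvx: "convex_on (Vn n) \<phi>"
    and lip: "\<And>v w. v \<in> Vn n \<Longrightarrow> w \<in> Vn n \<Longrightarrow> \<phi> w - \<phi> v \<le> L * norm (w - v)"
    and L: "L \<ge> 0" and p: "p \<in> Vn n"
  shows "\<exists>l\<in>Vn n. norm l \<le> L \<and> (\<forall>w\<in>Vn n. inner l (w - p) \<le> \<phi> w - \<phi> p)"
proof -
  define W :: "(fsq \<times> real) set" where "W = Vn n \<times> UNIV"
  define S :: "(fsq \<times> real) set" where "S = {(w - p, r - \<phi> p) | w r. w \<in> Vn n \<and> r > \<phi> w}"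
  have W_scale: "\<And>x c. x \<in> W \<Longrightarrow> c *\<^sub>R x \<in> W"
    unfolding W_def using subspace_Vn[of n] by (auto simp: subspace_def)
  have "convex S"
  proof (rule convexI)
    fix x y u v assume xy: "x \<in> S" "y \<in> S" and uv: "0 \<le> (u::real)" "0 \<le> v" "u + v = 1"
    obtain w1 r1 where 1: "x = (w1 - p, r1 - \<phi> p)" "w1 \<in> Vn n" "r1 > \<phi> w1" using xy S_def by auto
    obtain w2 r2 where 2: "y = (w2 - p, r2 - \<phi> p)" "w2 \<in> Vn n" "r2 > \<phi> w2" using xy S_def by auto
    have wV: "u *\<^sub>R w1 + v *\<^sub>R w2 \<in> Vn n" using 1 2 subspace_Vn[of n] by (auto simp: subspace_def)
    have uu: "u = 1 - v" using uv by simp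
    have "\<phi> (u *\<^sub>R w1 + v *\<^sub>R w2) \<le> u * \<phi> w1 + v * \<phi> w2"
      using convex_onD[OF cvx, of v w1 w2] 1 2 uv unfolding uu by simp
    also have "\<dots> < u * r1 + v * r2"
    proof (cases "u = 0")
      case True then show ?thesis using uv 2 by simp
    next
      case False
      then have "u * \<phi> w1 < u * r1" using uv 1 by simp
      moreover have "v * \<phi> w2 \<le> v * r2" using uv 2 by (simp add: mult_left_mono)
      ultimately show ?thesis by linarith
    qed
    finally have lt: "u * r1 + v * r2 > \<phi> (u *\<^sub>R w1 + v *\<^sub>R w2)" .
    have "u *\<^sub>R (w1 - p) + v *\<^sub>R (w2 - p) = (u *\<^sub>R w1 + v *\<^sub>R w2) - (u + v) *\<^sub>R p"
      by (simp add: scaleR_diff_right scaleR_add_left)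
    then have e1: "u *\<^sub>R (w1 - p) + v *\<^sub>R (w2 - p) = (u *\<^sub>R w1 + v *\<^sub>R w2) - p" using uv by simp
    have "u * (r1 - \<phi> p) + v * (r2 - \<phi> p) = (u * r1 + v * r2) - (u + v) * \<phi> p"
      by (simp add: right_diff_distrib distrib_right)
    then have e2: "u * (r1 - \<phi> p) + v * (r2 - \<phi> p) = (u * r1 + v * r2) - \<phi> p" using uv by simp
    have "u *\<^sub>R x + v *\<^sub>R y = ((u *\<^sub>R w1 + v *\<^sub>R w2) - p, (u * r1 + v * r2) - \<phi> p)"
      using 1 2 e1 e2 by simp
    then show "u *\<^sub>R x + v *\<^sub>R y \<in> S" unfolding S_def using wV lt by blast
  qed
  have "0 \<notin> S" unfolding S_def by (auto simp: zero_prod_def)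
  have "S \<subseteq> W" unfolding S_def W_def using subspace_Vn[of n] p
    by (auto simp: subspace_diff)
  have cpt: "compact {x\<in>W. norm x = 1}"
  proof -
    have sub1: "{x\<in>W. norm x = 1} \<subseteq> {v \<in> Vn n. norm v \<le> 1} \<times> {-1..1}"
    proof
      fix z assume z: "z \<in> {x\<in>W. norm x = 1}"
      obtain v r where vr: "z = (v, r)" by (cases z)
      have "norm v \<le> 1" using norm_fst_le[of v r] z vr by simp
      moreover have "\<bar>r\<bar> \<le> 1" using norm_snd_le[of r v] z vr by simp
      moreover have "v \<in> Vn n" using z vr W_def by auto
      ultimately show "z \<in> {v \<in> Vn n. norm v \<le> 1} \<times> {-1..1}" using vr by auto
    qed
    moreover have "closed {x\<in>W. norm x = 1}"
    proof -
      have eq: "{x\<in>W. norm x = 1} = W \<inter> {x. norm x = 1}" by auto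
      have cW: "closed W" unfolding W_def using closed_Times[OF closed_Vn[of n] closed_UNIV] .
      have "closed {x::fsq\<times>real. norm x = 1}"
        by (rule closed_Collect_eq) (auto intro: continuous_on_norm_id)
      then have "closed (W \<inter> {x. norm x = 1})" by (rule closed_Int[OF cW])
      then show ?thesis using eq by simp
    qed
    moreover have "compact ({v \<in> Vn n. norm v \<le> 1} \<times> {-1..1::real})"
      by (intro compact_Times compact_Vn_ball compact_Icc)
    ultimately have "compact (({v \<in> Vn n. norm v \<le> 1} \<times> {-1..1::real}) \<inter> {x\<in>W. norm x = 1})"
      by (intro compact_Int_closed)
    moreover have "({v \<in> Vn n. norm v \<le> 1} \<times> {-1..1::real}) \<inter> {x\<in>W. norm x = 1} = {x\<in>W. norm x = 1}"
      using sub1 by blast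
    ultimately show ?thesis by simp
  qed
  have w0: "(0, 1) \<in> W" "(0::fsq, 1::real) \<noteq> 0" unfolding W_def using subspace_Vn[of n]
    by (auto simp: subspace_def zero_prod_def)
  obtain a where aW: "a \<in> W" and a0: "a \<noteq> 0" and aS: "\<forall>x\<in>S. inner a x \<ge> 0"
    using sep_nonstrict[OF \<open>convex S\<close> \<open>0 \<notin> S\<close> \<open>S \<subseteq> W\<close> cpt w0 W_scale] by blast
  obtain \<alpha> \<beta> where a: "a = (\<alpha>, \<beta>)" by (cases a)
  have \<alpha>V: "\<alpha> \<in> Vn n" using aW a W_def by auto
  have key: "inner \<alpha> (w - p) + \<beta> * (r - \<phi> p) \<ge> 0" if "w \<in> Vn n" "r > \<phi> w" for w r
  proof -
    have "(w - p, r - \<phi> p) \<in> S" using that S_def by auto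
    then show ?thesis using aS a by (auto simp: inner_prod_def)
  qed
  have "\<beta> \<ge> 0" using key[OF p, of "\<phi> p + 1"] by simp
  have "\<beta> \<noteq> 0"
  proof
    assume "\<beta> = 0"
    have "p - \<alpha> \<in> Vn n" using p \<alpha>V subspace_Vn[of n] by (simp add: subspace_diff)
    from key[OF this, of "\<phi> (p - \<alpha>) + 1"] \<open>\<beta> = 0\<close> have "inner \<alpha> (- \<alpha>) \<ge> 0" by simp
    then have "inner \<alpha> \<alpha> = 0" using inner_ge_zero[of \<alpha>] by simp
    then have "\<alpha> = 0" by simp
    then show False using a0 a \<open>\<beta> = 0\<close> by (simp add: zero_prod_def)
  qed
  then have \<beta>: "\<beta> > 0" using \<open>\<beta> \<ge> 0\<close> by simp
  define l where "l = - (1 / \<beta>) *\<^sub>R \<alpha>"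
  have lV: "l \<in> Vn n" using subspace_scale[OF subspace_Vn \<alpha>V, of "- (1 / \<beta>)"] unfolding l_def by simp
  have sub: "inner l (w - p) \<le> \<phi> w - \<phi> p" if w: "w \<in> Vn n" for w
  proof -
    have "inner \<alpha> (w - p) + \<beta> * (\<phi> w - \<phi> p) \<ge> - \<beta> * e" if "e > 0" for e
    proof -
      have "\<beta> * (\<phi> w + e - \<phi> p) = \<beta> * (\<phi> w - \<phi> p) + \<beta> * e" by (simp add: algebra_simps)
      then show ?thesis using key[OF w, of "\<phi> w + e"] that by simp
    qed
    note h = this
    define c where "c = inner \<alpha> (w - p) + \<beta> * (\<phi> w - \<phi> p)"
    have c0: "c \<ge> 0"
    proof (rule ccontr)
      assume "\<not> c \<ge> 0"
      then have "c < 0" by simp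
      have e: "- c / (2 * \<beta>) > 0" using \<open>c < 0\<close> \<beta> by (simp add: divide_neg_pos)
      have "c \<ge> - \<beta> * (- c / (2 * \<beta>))" using h[OF e] c_def by simp
      moreover have "- \<beta> * (- c / (2 * \<beta>)) = c / 2" using \<beta> by simp
      ultimately show False using \<open>c < 0\<close> by simp
    qed
    have il: "inner l (w - p) = - inner \<alpha> (w - p) / \<beta>" by (simp add: l_def)
    have "- inner \<alpha> (w - p) \<le> (\<phi> w - \<phi> p) * \<beta>" using c0 c_def by (simp add: mult.commute)
    then have "(- inner \<alpha> (w - p)) / \<beta> \<le> \<phi> w - \<phi> p" using pos_divide_le_eq[OF \<beta>] by blast
    then show ?thesis unfolding il .
  qed
  have "norm l \<le> L"
  proof (cases "l = 0")
    case True then show ?thesis using L by simp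
  next
    case False
    have pl: "p + l \<in> Vn n" using p lV subspace_Vn[of n] by (simp add: subspace_def)
    have "inner l l \<le> \<phi> (p + l) - \<phi> p" using sub[OF pl] by simp
    also have "\<dots> \<le> L * norm l" using lip[OF p pl] by simp
    moreover have "inner l l = norm l * norm l" by (simp add: power2_norm_eq_inner[symmetric] power2_eq_square)
    ultimately have "norm l * norm l \<le> L * norm l" by simp
    moreover have "norm l > 0" using False by simp
    ultimately show ?thesis by simp
  qed
  then show ?thesis using lV sub by blast
qed




lemma affine_dependent_Vn:
  assumes "finite S" "S \<subseteq> Vn n" "card S \<ge> n + 2"
  shows "affine_dependent S"
proof -
  from assms(3) have "S \<noteq> {}" by auto
  then obtain a where a: "a \<in> S" by auto
  let ?T = "{x - a |x. x \<in> S - {a}}"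
  have *: "?T = (\<lambda>x. x - a) ` (S - {a})" by auto
  have cardT: "card ?T = card (S - {a})"
    unfolding * by (rule card_image) (simp add: inj_on_def)
  have TV: "?T \<subseteq> Vn n" using assms(2) a by (auto intro: subspace_diff[OF subspace_Vn])
  have "dependent ?T"
  proof (rule ccontr)
    assume "\<not> dependent ?T"
    then have "card ?T \<le> n" using Vn_indep_card[OF _ TV] by auto
    moreover have "card (S - {a}) = card S - 1" using a assms(1) by simp
    ultimately show False using cardT assms(3) by simp
  qed
  then have "affine_dependent (insert a (S - {a}))"
    by (rule dependent_imp_affine_dependent) simp
  then show ?thesis using a by (simp add: insert_absorb)
qed

lemma caratheodory_Vn:
  assumes PV: "P \<subseteq> Vn n" and y: "y \<in> convex hull P"
  shows "\<exists>S. finite S \<and> S \<subseteq> P \<and> S \<noteq> {} \<and> card S \<le> n + 1 \<and> y \<in> convex hull S"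
proof -
  let ?P = "\<lambda>k. \<exists>S u. finite S \<and> card S = k \<and> S \<subseteq> P \<and> (\<forall>x\<in>S. 0 \<le> u x) \<and>
    sum u S = 1 \<and> (\<Sum>v\<in>S. u v *\<^sub>R v) = y"
  have "\<exists>S u. finite S \<and> S \<subseteq> P \<and> (\<forall>x\<in>S. 0 \<le> u x) \<and> sum u S = 1 \<and> (\<Sum>v\<in>S. u v *\<^sub>R v) = y"
    using y unfolding convex_hull_explicit by auto
  then obtain N where "?P N" by auto
  then have "\<exists>k\<le>N. (\<forall>j<k. \<not> ?P j) \<and> ?P k"
    by (rule_tac ex_least_nat_le, auto)
  then obtain k where "?P k" and smallest: "\<forall>j<k. \<not> ?P j"
    by blast
  then obtain S u where S: "finite S" "card S = k" "S\<subseteq>P"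
    and u: "\<forall>x\<in>S. 0 \<le> u x" "sum u S = 1"  "(\<Sum>v\<in>S. u v *\<^sub>R v) = y" by auto
  have "card S \<le> n + 1"
  proof (rule ccontr, simp only: not_le)
    assume "n + 1 < card S"
    moreover have "S \<subseteq> Vn n" using S(3) PV by auto
    ultimately have "affine_dependent S"
      using affine_dependent_Vn[OF S(1)] by auto
    then obtain w v where wv: "sum w S = 0" "v\<in>S" "w v \<noteq> 0" "(\<Sum>v\<in>S. w v *\<^sub>R v) = 0"
      using affine_dependent_explicit_finite[OF S(1)] by auto
    define i where "i = (\<lambda>v. (u v) / (- w v)) ` {v\<in>S. w v < 0}"
    define t where "t = Min i"
    have "\<exists>x\<in>S. w x < 0"
      by (smt (verit, best) S(1) sum_pos2 wv)
    then have "i \<noteq> {}" unfolding i_def by auto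
    then have "t \<ge> 0"
      using Min_ge_iff[of i 0] and S(1) u[unfolded le_less]
      unfolding t_def i_def
      by (auto simp: divide_le_0_iff)
    have t: "\<forall>v\<in>S. u v + t * w v \<ge> 0"
    proof
      fix v
      assume "v \<in> S"
      then have v: "0 \<le> u v"
        using u(1) by blast
      show "0 \<le> u v + t * w v"
      proof (cases "w v < 0")
        case False
        thus ?thesis using v \<open>t\<ge>0\<close> by auto
      next
        case True
        then have "t \<le> u v / (- w v)"
          using \<open>v\<in>S\<close> S unfolding t_def i_def by (auto intro: Min_le)
        then show ?thesis
          unfolding real_0_le_add_iff
          using True neg_le_minus_divide_eq by auto
      qed
    qed
    obtain a where "a \<in> S" and "t = (\<lambda>v. (u v) / (- w v)) a" and "w a < 0"
      using Min_in[OF _ \<open>i\<noteq>{}\<close>] and S(1) unfolding i_def t_def by auto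
    then have a: "a \<in> S" "u a + t * w a = 0" by auto
    have *: "\<And>f. sum f (S - {a}) = sum f S - ((f a)::'b::ab_group_add)"
      unfolding sum.remove[OF S(1) \<open>a\<in>S\<close>] by auto
    have "(\<Sum>v\<in>S. u v + t * w v) = 1"
      by (metis add.right_neutral mult_zero_right sum.distrib sum_distrib_left u(2) wv(1))
    moreover have "(\<Sum>v\<in>S. u v *\<^sub>R v + (t * w v) *\<^sub>R v) - (u a *\<^sub>R a + (t * w a) *\<^sub>R a) = y"
      unfolding sum.distrib u(3) scaleR_scaleR[symmetric] scaleR_right.sum [symmetric] wv(4)
      using a(2) [THEN eq_neg_iff_add_eq_0 [THEN iffD2]] by simp
    ultimately have "?P (k - 1)"
      apply (rule_tac x="(S - {a})" in exI)
      apply (rule_tac x="\<lambda>v. u v + t * w v" in exI)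
      using S t a
      apply (auto simp: * scaleR_left_distrib)
      done
    then show False
      using smallest[THEN spec[where x="k - 1"]] \<open>n + 1 < card S\<close> S(2) by auto
  qed
  moreover have "S \<noteq> {}" using u(2) by auto
  moreover have "y \<in> convex hull S"
    unfolding convex_hull_finite[OF S(1)] using u by auto
  ultimately show ?thesis using S by blast
qed

fun Qc :: "fsq set \<Rightarrow> nat \<Rightarrow> fsq set" where
  "Qc D 0 = D"
| "Qc D (Suc m) = (\<lambda>(d, q, u). (1 - u) *\<^sub>R d + u *\<^sub>R q) ` (D \<times> Qc D m \<times> {0..1})"

lemma compact_Qc: "compact D \<Longrightarrow> compact (Qc D m)"
proof (induction m)
  case 0 then show ?case by simp
next
  case (Suc m)
  have "compact (D \<times> Qc D m \<times> {0..1::real})"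
    using Suc by (intro compact_Times compact_Icc) auto
  moreover have "continuous_on (D \<times> Qc D m \<times> {0..1::real}) (\<lambda>(d, q, u). (1 - u) *\<^sub>R d + u *\<^sub>R q)"
    by (auto intro!: continuous_intros simp: case_prod_unfold)
  ultimately show ?case by (simp add: compact_continuous_image)
qed

lemma Qc_sub_hull: "Qc D m \<subseteq> convex hull D"
proof (induction m)
  case 0 then show ?case by (simp add: hull_subset)
next
  case (Suc m)
  show ?case
  proof
    fix x assume "x \<in> Qc D (Suc m)"
    then obtain d q u where x: "x = (1 - u) *\<^sub>R d + u *\<^sub>R q" "d \<in> D" "q \<in> Qc D m" "u \<in> {0..1}"
      by auto
    then have "d \<in> convex hull D" "q \<in> convex hull D" using Suc hull_subset[of D convex] by auto
    then show "x \<in> convex hull D" using x convexD_alt[OF convex_convex_hull, of d D q u] by auto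
  qed
qed

lemma Qc_Suc_mono: "Qc D m \<subseteq> Qc D (Suc m)"
proof
  fix x assume x: "x \<in> Qc D m"
  then have "D \<noteq> {}" using Qc_sub_hull[of D m] by auto
  then obtain d where d: "d \<in> D" by auto
  have e1: "x = (\<lambda>(d, q, u). (1 - u) *\<^sub>R d + u *\<^sub>R q) (d, x, 1::real)" by simp
  have e2: "(d, x, 1::real) \<in> D \<times> Qc D m \<times> {0..1}" using d x by auto
  show "x \<in> Qc D (Suc m)" unfolding Qc.simps by (rule image_eqI[of x "\<lambda>(d, q, u). (1 - u) *\<^sub>R d + u *\<^sub>R q", OF e1 e2])
qed

lemma Qc_mono: "m \<le> m' \<Longrightarrow> Qc D m \<subseteq> Qc D m'"
  by (induction m' rule: dec_induct) (use Qc_Suc_mono in blast)+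

lemma hull_sub_Qc:
  assumes "finite S" "S \<noteq> {}" "S \<subseteq> D" "card S \<le> m + 1"
  shows "convex hull S \<subseteq> Qc D m"
  using assms
proof (induction S arbitrary: m rule: finite_ne_induct)
  case (singleton x)
  then show ?case using Qc_mono[of 0 m D] by auto
next
  case (insert d S)
  then obtain m' where m: "m = Suc m'" "card S \<le> m' + 1"
    by (cases m) auto
  have IH: "convex hull S \<subseteq> Qc D m'" using insert m by auto
  show ?case
  proof
    fix x assume "x \<in> convex hull (insert d S)"
    then obtain u v b where uv: "u \<ge> 0" "v \<ge> 0" "u + v = 1" "b \<in> convex hull S" "x = u *\<^sub>R d + v *\<^sub>R b"
      using convex_hull_insert[OF insert(2)] by auto
    have "u = 1 - v" using uv by simp
    then have e1: "x = (\<lambda>(d, q, u). (1 - u) *\<^sub>R d + u *\<^sub>R q) (d, b, v)" using uv by simp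
    have e2: "(d, b, v) \<in> D \<times> Qc D m' \<times> {0..1}" using uv IH insert by auto
    show "x \<in> Qc D m" unfolding m Qc.simps by (rule image_eqI[of x "\<lambda>(d, q, u). (1 - u) *\<^sub>R d + u *\<^sub>R q", OF e1 e2])
  qed
qed

lemma hull_eq_Qc: "D \<subseteq> Vn n \<Longrightarrow> convex hull D = Qc D n"
proof
  assume DV: "D \<subseteq> Vn n"
  show "convex hull D \<subseteq> Qc D n"
  proof
    fix y assume "y \<in> convex hull D"
    then obtain S where S: "finite S" "S \<subseteq> D" "S \<noteq> {}" "card S \<le> n + 1" "y \<in> convex hull S"
      using caratheodory_Vn[OF DV] by blast
    then show "y \<in> Qc D n" using hull_sub_Qc[of S D n] by auto
  qed
qed (rule Qc_sub_hull)

lemma Qc_rep: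
  assumes "x \<in> Qc D m"
  shows "\<exists>k lam l. 1 \<le> k \<and> k \<le> m + 1 \<and> (\<forall>i<k. lam i > 0 \<and> l i \<in> D) \<and> (\<Sum>i<k. lam i) = 1
     \<and> x = (\<Sum>i<k. lam i *\<^sub>R l i)"
  using assms
proof (induction m arbitrary: x)
  case 0
  then show ?case by (intro exI[of _ 1] exI[of _ "\<lambda>_. 1"] exI[of _ "\<lambda>_. x"]) auto
next
  case (Suc m)
  then obtain d q u where x: "x = (1 - u) *\<^sub>R d + u *\<^sub>R q" "d \<in> D" "q \<in> Qc D m" "u \<in> {0..1}"
    by auto
  obtain k lam l where rep: "1 \<le> k" "k \<le> m + 1" "\<forall>i<k. lam i > 0 \<and> l i \<in> D" "(\<Sum>i<k. lam i) = 1"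
     "q = (\<Sum>i<k. lam i *\<^sub>R l i)"
    using Suc.IH[OF x(3)] by blast
  consider "u = 0" | "u = 1" | "0 < u \<and> u < 1" using x(4) by fastforce
  then show ?case
  proof cases
    case 1
    then show ?thesis using x by (intro exI[of _ 1] exI[of _ "\<lambda>_. 1"] exI[of _ "\<lambda>_. d"]) auto
  next
    case 2
    then show ?thesis using x rep by (intro exI[of _ k] exI[of _ lam] exI[of _ l]) auto
  next
    case 3
    define lam' where "lam' i = (if i = 0 then 1 - u else u * lam (i - 1))" for i
    define l' where "l' i = (if i = 0 then d else l (i - 1))" for i
    have pos: "\<forall>i<Suc k. lam' i > 0 \<and> l' i \<in> D"
      using 3 rep x(2) by (auto simp: lam'_def l'_def less_Suc_eq_0_disj)
    have "(\<Sum>i<Suc k. lam' i) = lam' 0 + (\<Sum>i<k. lam' (Suc i))"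
      by (rule sum.lessThan_Suc_shift)
    also have "\<dots> = (1 - u) + u * (\<Sum>i<k. lam i)" by (simp add: lam'_def sum_distrib_left)
    finally have s1: "(\<Sum>i<Suc k. lam' i) = 1" using rep by simp
    have "(\<Sum>i<Suc k. lam' i *\<^sub>R l' i) = lam' 0 *\<^sub>R l' 0 + (\<Sum>i<k. lam' (Suc i) *\<^sub>R l' (Suc i))"
      by (rule sum.lessThan_Suc_shift)
    also have "\<dots> = (1 - u) *\<^sub>R d + u *\<^sub>R (\<Sum>i<k. lam i *\<^sub>R l i)"
      by (simp add: lam'_def l'_def scaleR_sum_right)
    finally have s2: "x = (\<Sum>i<Suc k. lam' i *\<^sub>R l' i)" using rep x by simp
    show ?thesis using pos s1 s2 rep
      by (intro exI[of _ "Suc k"] exI[of _ lam'] exI[of _ l']) auto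
  qed
qed




lemma cont_U_comp:
  assumes cont: "continuous_on UNIV (\<lambda>(t, v). U t v)"
    and g: "continuous_on S g" and h: "continuous_on S h"
  shows "continuous_on S (\<lambda>x. U (g x) (h x) :: real)"
proof -
  have "continuous_on S (\<lambda>x. (\<lambda>(t, v). U t v) (g x, h x))"
    by (rule continuous_on_compose2[OF cont continuous_on_Pair[OF g h]]) auto
  then show ?thesis by simp
qed

lemma core:
  fixes U :: "'t::topological_space \<Rightarrow> fsq \<Rightarrow> real"
  assumes T: "compact (UNIV::'t set)"
    and cont: "continuous_on UNIV (\<lambda>(t, v). U t v)"
    and cvx: "\<And>t. convex_on (Vn n) (U t)"
    and lip: "\<And>t v w. v \<in> Vn n \<Longrightarrow> w \<in> Vn n \<Longrightarrow> U t w - U t v \<le> L * norm (w - v)"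
    and L: "L \<ge> 0"
    and le0: "\<And>t. U t 0 \<le> 0"
    and opt: "\<And>v. v \<in> Vn n \<Longrightarrow> \<exists>t. U t v \<ge> 0"
  shows "\<exists>k. 1 \<le> k \<and> k \<le> n + 1 \<and> (\<exists>ts lam. (\<forall>i<k. lam i > 0 \<and> U (ts i) 0 = 0) \<and>
          (\<Sum>i<k. lam i) = 1 \<and> (\<forall>v\<in>Vn n. (\<Sum>i<k. lam i * U (ts i) v) \<ge> 0))"
proof -
  define B where "B = {l \<in> Vn n. norm l \<le> L}"
  have cB: "compact B" unfolding B_def by (rule compact_Vn_ball)
  define D where "D = {l \<in> Vn n. \<exists>t. U t 0 = 0 \<and> (\<forall>w\<in>Vn n. inner l w \<le> U t w)}"
  have DV: "D \<subseteq> Vn n" unfolding D_def by auto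
  have DB: "D \<subseteq> B"
  proof
    fix l assume l: "l \<in> D"
    then obtain t where t: "U t 0 = 0" "\<forall>w\<in>Vn n. inner l w \<le> U t w" and lV: "l \<in> Vn n"
      unfolding D_def by auto
    have "inner l l \<le> U t l - U t 0" using t lV by auto
    also have "\<dots> \<le> L * norm l" using lip[of 0 l t] lV subspace_Vn[of n] by (simp add: subspace_0)
    finally have "norm l * norm l \<le> L * norm l" by (simp add: power2_norm_eq_inner[symmetric] power2_eq_square)
    then have "norm l \<le> L" using L by (cases "l = 0") auto
    then show "l \<in> B" using lV B_def by auto
  qed
  have cD: "compact D"
  proof -
    define Z where "Z = (UNIV \<times> B) \<inter> ({x. U (fst x) 0 = 0} \<inter>
        (\<Inter>w\<in>Vn n. {x::'t \<times> fsq. inner (snd x) w \<le> U (fst x) w}))"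
    have "closed {x::'t \<times> fsq. U (fst x) 0 = 0}"
      by (rule closed_Collect_eq) (auto intro!: cont_U_comp[OF cont] continuous_intros)
    moreover have "closed {x::'t \<times> fsq. inner (snd x) w \<le> U (fst x) w}" for w
      by (rule closed_Collect_le) (auto intro!: cont_U_comp[OF cont] continuous_intros)
    ultimately have cl1: "closed ({x. U (fst x) 0 = 0} \<inter>
        (\<Inter>w\<in>Vn n. {x::'t \<times> fsq. inner (snd x) w \<le> U (fst x) w}))"
      by (intro closed_Int closed_INT) auto
    have cp1: "compact (UNIV \<times> B :: ('t \<times> fsq) set)" using compact_Times[OF T cB] .
    have "compact Z" unfolding Z_def by (rule compact_Int_closed[OF cp1 cl1])
    then have "compact (snd ` Z)"
      by (rule compact_continuous_image[rotated]) (intro continuous_intros)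
    moreover have "snd ` Z = D"
    proof
      show "snd ` Z \<subseteq> D" unfolding Z_def D_def B_def by force
      show "D \<subseteq> snd ` Z"
      proof
        fix l assume l: "l \<in> D"
        then obtain t where t: "U t 0 = 0" "\<forall>w\<in>Vn n. inner l w \<le> U t w" unfolding D_def by auto
        have "(t, l) \<in> Z" unfolding Z_def using t DB l by auto
        then show "l \<in> snd ` Z" by force
      qed
    qed
    ultimately show ?thesis by simp
  qed
  have conv_sub: "convex hull D \<subseteq> Vn n"
    by (rule hull_minimal[OF DV]) (simp add: subspace_imp_convex subspace_Vn)
  have main: "0 \<in> convex hull D"
  proof (rule ccontr)
    assume nz: "0 \<notin> convex hull D"
    obtain h where hV: "h \<in> Vn n" and hD: "\<forall>l\<in>D. inner l h < 0"
    proof (cases "D = {}")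
      case True
      then show ?thesis using that[of 0] subspace_Vn[of n] by (auto simp: subspace_0)
    next
      case False
      have "compact (convex hull D)" using hull_eq_Qc[OF DV] compact_Qc[OF cD] by simp
      then obtain y where y: "y \<in> convex hull D" and yx: "\<forall>x\<in>convex hull D. inner y x \<ge> inner y y"
        using sep_compact_0[of "convex hull D"] False by auto
      have "y \<noteq> 0" using y nz by auto
      then have yy: "inner y y > 0" by simp
      have "- y \<in> Vn n" using y conv_sub subspace_Vn[of n] by (auto simp: subspace_neg)
      moreover have "\<forall>l\<in>D. inner l (- y) < 0"
      proof
        fix l assume "l \<in> D"
        then have "inner y l \<ge> inner y y" using yx hull_subset[of D convex] by auto
        moreover have "inner l (- y) = - inner y l" by (simp add: inner_commute)
        ultimately show "inner l (- y) < 0" using yy by linarith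
      qed
      ultimately show ?thesis using that by blast
    qed
    define R where "R = ({0..1} \<times> (UNIV \<times> B)) \<inter>
       ({x. 0 \<le> U (fst (snd x)) (fst x *\<^sub>R h)} \<inter> {x. 0 \<le> inner (snd (snd x)) h} \<inter>
        (\<Inter>w\<in>Vn n. {x::real \<times> 't \<times> fsq. inner (snd (snd x)) (w - fst x *\<^sub>R h)
            \<le> U (fst (snd x)) w - U (fst (snd x)) (fst x *\<^sub>R h)}))"
    have "closed {x::real \<times> 't \<times> fsq. 0 \<le> U (fst (snd x)) (fst x *\<^sub>R h)}"
      by (rule closed_Collect_le) (auto intro!: cont_U_comp[OF cont] continuous_intros)
    moreover have "closed {x::real \<times> 't \<times> fsq. 0 \<le> inner (snd (snd x)) h}"
      by (rule closed_Collect_le) (auto intro!: continuous_intros)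
    moreover have "closed {x::real \<times> 't \<times> fsq. inner (snd (snd x)) (w - fst x *\<^sub>R h)
            \<le> U (fst (snd x)) w - U (fst (snd x)) (fst x *\<^sub>R h)}" for w
      by (rule closed_Collect_le) (auto intro!: cont_U_comp[OF cont] continuous_intros)
    ultimately have cl2: "closed ({x::real \<times> 't \<times> fsq. 0 \<le> U (fst (snd x)) (fst x *\<^sub>R h)} \<inter> {x. 0 \<le> inner (snd (snd x)) h} \<inter>
        (\<Inter>w\<in>Vn n. {x::real \<times> 't \<times> fsq. inner (snd (snd x)) (w - fst x *\<^sub>R h)
            \<le> U (fst (snd x)) w - U (fst (snd x)) (fst x *\<^sub>R h)}))"
      by (intro closed_Int closed_INT) auto
    have cp2: "compact ({0..1::real} \<times> (UNIV \<times> B) :: (real \<times> 't \<times> fsq) set)"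
      using T cB by (intro compact_Times compact_Icc)
    have "compact R" unfolding R_def by (rule compact_Int_closed[OF cp2 cl2])
    then have "compact (fst ` R)"
      by (rule compact_continuous_image[rotated]) (intro continuous_intros)
    then have cl: "closed (fst ` R)" by (rule compact_imp_closed)
    have "{0<..1} \<subseteq> fst ` R"
    proof
      fix s :: real assume s: "s \<in> {0<..1}"
      have shV: "s *\<^sub>R h \<in> Vn n" using hV subspace_Vn[of n] by (simp add: subspace_scale)
      obtain t where t: "U t (s *\<^sub>R h) \<ge> 0" using opt[OF shV] by blast
      obtain l where l: "l \<in> Vn n" "norm l \<le> L" "\<forall>w\<in>Vn n. inner l (w - s *\<^sub>R h) \<le> U t w - U t (s *\<^sub>R h)"
        using subgrad_exists[OF cvx lip L shV] by blast
      have "0 \<in> Vn n" using subspace_Vn[of n] by (simp add: subspace_0)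
      then have "inner l (0 - s *\<^sub>R h) \<le> U t 0 - U t (s *\<^sub>R h)" using l by blast
      then have "- s * inner l h \<le> 0" using t le0[of t] by simp
      then have "inner l h \<ge> 0" using s by (simp add: zero_le_mult_iff)
      then have "(s, t, l) \<in> R" unfolding R_def B_def using s t l by auto
      then show "s \<in> fst ` R" by force
    qed
    then have "closure {0<..1} \<subseteq> fst ` R" using cl by (rule closure_minimal)
    then have "0 \<in> fst ` R" by auto
    then obtain t l where tl: "(0, t, l) \<in> R" by force
    then have "U t 0 \<ge> 0" "inner l h \<ge> 0" "\<forall>w\<in>Vn n. inner l w \<le> U t w - U t 0" "l \<in> Vn n"
      unfolding R_def B_def by auto
    then have "l \<in> D" using le0[of t] unfolding D_def by force
    then show False using hD \<open>inner l h \<ge> 0\<close> by force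
  qed
  have "0 \<in> Qc D n" using main hull_eq_Qc[OF DV] by simp
  then obtain k lam l where rep: "1 \<le> k" "k \<le> n + 1" "\<forall>i<k. lam i > 0 \<and> l i \<in> D"
     "(\<Sum>i<k. lam i) = 1" "0 = (\<Sum>i<k. lam i *\<^sub>R l i)"
    using Qc_rep by blast
  have "\<forall>i<k. \<exists>t. U t 0 = 0 \<and> (\<forall>w\<in>Vn n. inner (l i) w \<le> U t w)"
    using rep(3) unfolding D_def by auto
  then obtain ts where ts: "\<forall>i<k. U (ts i) 0 = 0 \<and> (\<forall>w\<in>Vn n. inner (l i) w \<le> U (ts i) w)"
    by metis
  have "(\<Sum>i<k. lam i * U (ts i) v) \<ge> 0" if v: "v \<in> Vn n" for v
  proof -
    have "0 = inner (\<Sum>i<k. lam i *\<^sub>R l i) v" using rep(5) by simp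
    also have "\<dots> = (\<Sum>i<k. lam i * inner (l i) v)" by (simp add: inner_sum_left)
    also have "\<dots> \<le> (\<Sum>i<k. lam i * U (ts i) v)"
      by (rule sum_mono) (use rep(3) ts v in \<open>auto intro!: mult_left_mono\<close>)
    finally show ?thesis .
  qed
  then show ?thesis using rep ts by blast
qed





lemma apply_bcontfun_sum:
  "apply_bcontfun (sum F A) x = (\<Sum>a\<in>A. apply_bcontfun (F a) x)"
  by (induction A rule: infinite_finite_induct) auto

lemma cont_eval:
  fixes F :: "'a::t2_space \<Rightarrow> ('x::t2_space \<Rightarrow>\<^sub>C 'y::real_normed_vector)"
  assumes F: "continuous_on UNIV F"
  shows "continuous_on UNIV (\<lambda>p. apply_bcontfun (F (fst p)) (snd p))"
proof -
  have "isCont (\<lambda>p. apply_bcontfun (F (fst p)) (snd p)) p" for p :: "'a \<times> 'x"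
  proof -
  obtain a0 x0 where p: "p = (a0, x0)" by (cases p)
  let ?g = "\<lambda>p. apply_bcontfun (F (fst p)) (snd p)"
  have "(?g \<longlongrightarrow> ?g p) (nhds p)"
  proof (rule tendstoI)
    fix e :: real assume e: "e > 0"
    define S where "S = {q. dist (F (fst q)) (F a0) < e / 2} \<inter> {q. dist (apply_bcontfun (F a0) (snd q)) (apply_bcontfun (F a0) x0) < e / 2}"
    have "open {q::'a \<times> 'x. dist (F (fst q)) (F a0) < e / 2}"
      by (rule open_Collect_less) (auto intro!: continuous_intros continuous_on_compose2[OF F])
    moreover have "open {q::'a \<times> 'x. dist (apply_bcontfun (F a0) (snd q)) (apply_bcontfun (F a0) x0) < e / 2}"
      by (rule open_Collect_less)
         (auto intro!: continuous_intros continuous_on_compose2[OF continuous_on_apply_bcontfun[of UNIV "F a0"]])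
    ultimately have "open S" unfolding S_def by auto
    moreover have "p \<in> S" using e p unfolding S_def by auto
    moreover have "dist (?g q) (?g p) < e" if "q \<in> S" for q
    proof -
      have "dist (?g q) (?g p) \<le> dist (?g q) (apply_bcontfun (F a0) (snd q)) + dist (apply_bcontfun (F a0) (snd q)) (?g p)"
        by (rule dist_triangle)
      also have "dist (?g q) (apply_bcontfun (F a0) (snd q)) \<le> dist (F (fst q)) (F a0)"
        by (rule dist_bounded)
      finally show ?thesis using that p unfolding S_def by auto
    qed
    ultimately show "\<forall>\<^sub>F q in nhds p. dist (?g q) (?g p) < e"
      unfolding eventually_nhds by blast
  qed
  moreover have "at p \<le> nhds p" unfolding at_within_def by (rule inf_le1)
  ultimately show "isCont ?g p" unfolding isCont_def by (rule tendsto_mono[rotated])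
  qed
  then show ?thesis by (intro continuous_at_imp_continuous_on) auto
qed

lemma sup_attained:
  fixes \<phi> :: "'a::topological_space \<Rightarrow> real"
  assumes "compact (UNIV::'a set)" "continuous_on UNIV \<phi>"
  shows "\<exists>a. \<phi> a = (SUP a. \<phi> a)" "\<And>b. \<phi> b \<le> (SUP a. \<phi> a)"
proof -
  obtain a where a: "\<And>b. \<phi> b \<le> \<phi> a"
    using continuous_attains_sup[OF assms(1) _ assms(2)] by auto
  have "(SUP a. \<phi> a) = \<phi> a" by (rule cSup_eq_maximum) (use a in auto)
  then show "\<exists>a. \<phi> a = (SUP a. \<phi> a)" "\<And>b. \<phi> b \<le> (SUP a. \<phi> a)" using a by auto
qed

lemma norm_attained:
  fixes g :: "'x::topological_space \<Rightarrow>\<^sub>C 'y::real_normed_vector"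
  assumes "compact (UNIV::'x set)"
  shows "\<exists>x. norm (apply_bcontfun g x) = norm g"
proof -
  obtain x where x: "\<And>y. norm (apply_bcontfun g y) \<le> norm (apply_bcontfun g x)"
    using continuous_attains_sup[OF assms(1) _ continuous_on_norm[OF continuous_on_apply_bcontfun]] by auto
  have "norm g \<le> norm (apply_bcontfun g x)" by (rule norm_bound) (rule x)
  moreover have "norm (apply_bcontfun g x) \<le> norm g" by (rule norm_bounded)
  ultimately show ?thesis by (intro exI[of _ x]) simp
qed

theorem theorem2:
  fixes H :: "('x::t2_space \<Rightarrow>\<^sub>C 'y::real_normed_vector) set"
    and f :: "'a::t2_space \<Rightarrow> ('x \<Rightarrow>\<^sub>C 'y)"
    and fs :: "'x \<Rightarrow>\<^sub>C 'y"
    and n :: nat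
  assumes X_compact: "compact (UNIV :: 'x set)"
    and A_compact: "compact (UNIV :: 'a set)"
    and H_subspace: "subspace H"
    and H_dim: "dim H = n"
    and n_pos: "n \<ge> 1"
    and f_cont: "continuous_on UNIV f"
    and fs_H: "fs \<in> H"
  shows "(\<forall>g\<in>H. (SUP a. norm (f a - fs)) \<le> (SUP a. norm (f a - g)))
    \<longleftrightarrow>
    (\<exists>k::nat. 1 \<le> k \<and> k \<le> n + 1 \<and>
      (\<exists>(as :: nat \<Rightarrow> 'a) (xs :: nat \<Rightarrow> 'x) (lam :: nat \<Rightarrow> real).
        (\<forall>i<k. lam i > 0) \<and> (\<Sum>i<k. lam i) = 1 \<and>
        (\<forall>g\<in>H. (\<Sum>i<k. lam i * norm (f (as i) (xs i) - fs (xs i)))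
                \<le> (\<Sum>i<k. lam i * norm (f (as i) (xs i) - g (xs i)))) \<and>
        (\<forall>i<k. norm (f (as i) (xs i) - fs (xs i)) = norm (f (as i) - fs) \<and>
               norm (f (as i) - fs) = (SUP a. norm (f a - fs)))))"
proof -
  define E where "E = (SUP a. norm (f a - fs))"
  have contg: "continuous_on UNIV (\<lambda>a. norm (f a - g))" for g
    by (intro continuous_intros f_cont)
  have supg: "norm (f a - g) \<le> (SUP a. norm (f a - g))" for a g
    using sup_attained(2)[OF A_compact contg] .
  have attg: "\<exists>a. norm (f a - g) = (SUP a. norm (f a - g))" for g
    using sup_attained(1)[OF A_compact contg] .
  show ?thesis (is "?lhs \<longleftrightarrow> ?rhs")
  proof
    assume best: "\<forall>g\<in>H. (SUP a. norm (f a - fs)) \<le> (SUP a. norm (f a - g))"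
    obtain B where B: "B \<subseteq> H" "independent B" "H \<subseteq> span B" "card B = n"
      using basis_exists[of H] H_dim by blast
    have finB: "finite B" using B(4) n_pos by (metis card.infinite not_one_le_zero)
    obtain b where bb: "bij_betw b {..<n} B"
      using ex_bij_betw_nat_finite[OF finB] B(4) by (auto simp: atLeast0LessThan)
    have bH: "b j \<in> H" if "j < n" for j using bb B(1) that by (auto simp: bij_betw_def)
    define G where "G v = (\<Sum>j<n. cf v j *\<^sub>R b j)" for v
    have GH: "G v \<in> H" for v
      unfolding G_def using bH by (intro subspace_sum[OF H_subspace] subspace_scale[OF H_subspace]) auto
    have Gapp: "apply_bcontfun (G v) x = (\<Sum>j<n. cf v j *\<^sub>R apply_bcontfun (b j) x)" for v x
      unfolding G_def by (simp add: apply_bcontfun_sum)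
    have Gsurj: "\<exists>v\<in>Vn n. G v = g" if g: "g \<in> H" for g
    proof -
      have "g \<in> span B" using g B(3) by auto
      then obtain u where u: "g = (\<Sum>y\<in>B. u y *\<^sub>R y)" using span_finite[OF finB] by auto
      also have "\<dots> = (\<Sum>j<n. u (b j) *\<^sub>R b j)"
        using sum.reindex_bij_betw[OF bb, of "\<lambda>y. u y *\<^sub>R y"] by simp
      finally have g1: "g = (\<Sum>j<n. u (b j) *\<^sub>R b j)" .
      define v where "v = (\<Sum>j<n. u (b j) *\<^sub>R ev j)"
      have cfv: "cf v i = (if i < n then u (b i) else 0)" for i
      proof -
        have "cf v i = (\<Sum>j<n. u (b j) * (if i = j then 1 else 0))" by (simp add: v_def)
        also have "\<dots> = (if i < n then u (b i) else 0)"
          by (simp add: if_distrib[of "\<lambda>x. _ * x"] sum.delta cong: if_cong)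
        finally show ?thesis .
      qed
      have "v \<in> Vn n" unfolding Vn_def using cfv by auto
      moreover have "G v = g" unfolding G_def g1 by (intro sum.cong) (auto simp: cfv)
      ultimately show ?thesis by blast
    qed
    define U where "U t v = norm (apply_bcontfun (f (fst t)) (snd t) - apply_bcontfun fs (snd t)
        - (\<Sum>j<n. cf v j *\<^sub>R apply_bcontfun (b j) (snd t))) - E" for t :: "'a \<times> 'x" and v
    define L where "L = (\<Sum>j<n. norm (b j))"
    have T: "compact (UNIV :: ('a \<times> 'x) set)"
      using compact_Times[OF A_compact X_compact] by simp
    have ce: "continuous_on UNIV (\<lambda>p::('a \<times> 'x) \<times> fsq. apply_bcontfun (f (fst (fst p))) (snd (fst p)))"
    proof -
      have "continuous_on UNIV (\<lambda>p::('a \<times> 'x) \<times> fsq. (\<lambda>q. apply_bcontfun (f (fst q)) (snd q)) (fst p))"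
        by (rule continuous_on_compose2[OF cont_eval[OF f_cont]]) (auto intro: continuous_intros)
      then show ?thesis by simp
    qed
    have ca: "continuous_on UNIV (\<lambda>p::('a \<times> 'x) \<times> fsq. apply_bcontfun h (snd (fst p)))"
      for h :: "'x \<Rightarrow>\<^sub>C 'y"
      by (rule continuous_on_compose2[OF continuous_on_apply_bcontfun[of UNIV h]]) (auto intro!: continuous_intros)
    have cont: "continuous_on UNIV (\<lambda>(t, v). U t v)"
      unfolding U_def case_prod_unfold
      by (intro continuous_intros ce ca)
    have lin: "(\<Sum>j<n. cf (c *\<^sub>R v + d *\<^sub>R w) j *\<^sub>R y j) = c *\<^sub>R (\<Sum>j<n. cf v j *\<^sub>R y j) + d *\<^sub>R (\<Sum>j<n. cf w j *\<^sub>R y j)"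
      for c d v w and y :: "nat \<Rightarrow> 'y"
      by (simp add: scaleR_add_left sum.distrib scaleR_sum_right)
    have cvx: "convex_on (Vn n) (U t)" for t
    proof (rule convex_onI)
      show "convex (Vn n)" by (simp add: subspace_imp_convex subspace_Vn)
      fix s :: real and v w :: fsq assume s: "0 < s" "s < 1"
      let ?c = "apply_bcontfun (f (fst t)) (snd t) - apply_bcontfun fs (snd t)"
      let ?L = "\<lambda>v. (\<Sum>j<n. cf v j *\<^sub>R apply_bcontfun (b j) (snd t))"
      have "?L ((1 - s) *\<^sub>R v + s *\<^sub>R w) = (1 - s) *\<^sub>R ?L v + s *\<^sub>R ?L w" by (rule lin)
      then have "?c - ?L ((1 - s) *\<^sub>R v + s *\<^sub>R w) = (1 - s) *\<^sub>R (?c - ?L v) + s *\<^sub>R (?c - ?L w)"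
        by (simp add: algebra_simps)
      then have "norm (?c - ?L ((1 - s) *\<^sub>R v + s *\<^sub>R w)) \<le> (1 - s) * norm (?c - ?L v) + s * norm (?c - ?L w)"
        using s by (metis (no_types, lifting) abs_of_nonneg less_eq_real_def norm_scaleR norm_triangle_ineq diff_ge_0_iff_ge)
      then show "U t ((1 - s) *\<^sub>R v + s *\<^sub>R w) \<le> (1 - s) * U t v + s * U t w"
        unfolding U_def by (simp add: algebra_simps)
    qed
    have L0: "L \<ge> 0" unfolding L_def by (simp add: sum_nonneg)
    have lip: "U t w - U t v \<le> L * norm (w - v)" for t v w
    proof -
      let ?c = "apply_bcontfun (f (fst t)) (snd t) - apply_bcontfun fs (snd t)"
      let ?L = "\<lambda>v. (\<Sum>j<n. cf v j *\<^sub>R apply_bcontfun (b j) (snd t))"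
      have "U t w - U t v = norm (?c - ?L w) - norm (?c - ?L v)" unfolding U_def by simp
      also have "\<dots> \<le> norm ((?c - ?L w) - (?c - ?L v))" by (rule norm_triangle_ineq2)
      also have "(?c - ?L w) - (?c - ?L v) = (\<Sum>j<n. (cf v j - cf w j) *\<^sub>R apply_bcontfun (b j) (snd t))"
        by (simp add: scaleR_diff_left sum_subtractf)
      also have "norm \<dots> \<le> (\<Sum>j<n. norm ((cf v j - cf w j) *\<^sub>R apply_bcontfun (b j) (snd t)))"
        by (rule norm_sum)
      also have "\<dots> \<le> (\<Sum>j<n. norm (w - v) * norm (b j))"
      proof (rule sum_mono)
        fix j
        have "\<bar>cf v j - cf w j\<bar> \<le> norm (w - v)"
          using abs_cf_le[of "w - v" j] by simp
        moreover have "norm (apply_bcontfun (b j) (snd t)) \<le> norm (b j)" by (rule norm_bounded)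
        ultimately show "norm ((cf v j - cf w j) *\<^sub>R apply_bcontfun (b j) (snd t)) \<le> norm (w - v) * norm (b j)"
          by (simp add: mult_mono)
      qed
      also have "\<dots> = L * norm (w - v)" unfolding L_def by (simp add: sum_distrib_left mult.commute)
      finally show ?thesis .
    qed
    have le0: "U t 0 \<le> 0" for t
    proof -
      have "norm (apply_bcontfun (f (fst t)) (snd t) - apply_bcontfun fs (snd t)) \<le> norm (f (fst t) - fs)"
        using norm_bounded[of "f (fst t) - fs" "snd t"] by simp
      also have "\<dots> \<le> E" unfolding E_def by (rule supg)
      finally show ?thesis unfolding U_def by simp
    qed
    have opt: "\<exists>t. U t v \<ge> 0" if v: "v \<in> Vn n" for v
    proof -
      define g where "g = fs + G v"
      have "g \<in> H" unfolding g_def using fs_H GH by (rule subspace_add[OF H_subspace])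
      then have E1: "E \<le> (SUP a. norm (f a - g))" using best unfolding E_def by blast
      obtain a where a: "norm (f a - g) = (SUP a. norm (f a - g))" using attg by blast
      obtain x where x: "norm (apply_bcontfun (f a - g) x) = norm (f a - g)"
        using norm_attained[OF X_compact] by blast
      have eqx: "apply_bcontfun (f a - g) x = apply_bcontfun (f a) x - apply_bcontfun fs x
          - (\<Sum>j<n. cf v j *\<^sub>R apply_bcontfun (b j) x)"
        by (simp add: g_def Gapp)
      have "U (a, x) v = norm (apply_bcontfun (f a - g) x) - E"
        unfolding U_def fst_conv snd_conv eqx ..
      then have "U (a, x) v \<ge> 0" using E1 a x by linarith
      then show ?thesis by blast
    qed
    obtain k ts lam where k: "1 \<le> k" "k \<le> n + 1" and lam: "\<forall>i<k. lam i > 0 \<and> U (ts i) 0 = 0"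
      "(\<Sum>i<k. lam i) = 1" and ineq: "\<forall>v\<in>Vn n. (\<Sum>i<k. lam i * U (ts i) v) \<ge> 0"
      using core[OF T cont cvx lip L0 le0 opt] by blast
    define as where "as i = fst (ts i)" for i
    define xs where "xs i = snd (ts i)" for i
    have ii: "norm (f (as i) (xs i) - fs (xs i)) = norm (f (as i) - fs) \<and>
               norm (f (as i) - fs) = (SUP a. norm (f a - fs))" if i: "i < k" for i
    proof -
      have e1: "norm (f (as i) (xs i) - fs (xs i)) = E"
        using lam(1) i unfolding U_def as_def xs_def by auto
      have "norm (f (as i) (xs i) - fs (xs i)) \<le> norm (f (as i) - fs)"
        using norm_bounded[of "f (as i) - fs" "xs i"] by simp
      moreover have "norm (f (as i) - fs) \<le> E" unfolding E_def by (rule supg)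
      ultimately show ?thesis using e1 unfolding E_def by simp
    qed
    have i: "(\<Sum>i<k. lam i * norm (f (as i) (xs i) - fs (xs i)))
                \<le> (\<Sum>i<k. lam i * norm (f (as i) (xs i) - g (xs i)))" if g: "g \<in> H" for g
    proof -
      have "g - fs \<in> H" using g fs_H by (rule subspace_diff[OF H_subspace])
      then obtain v where v: "v \<in> Vn n" "G v = g - fs" using Gsurj by blast
      have Ui: "U (ts i) v = norm (f (as i) (xs i) - g (xs i)) - E" for i
      proof -
        have "(\<Sum>j<n. cf v j *\<^sub>R apply_bcontfun (b j) (xs i)) = apply_bcontfun (g - fs) (xs i)"
          using Gapp[of v "xs i"] v(2) by simp
        then show ?thesis unfolding U_def as_def xs_def by simp
      qed
      have "(\<Sum>i<k. lam i * norm (f (as i) (xs i) - fs (xs i))) = (\<Sum>i<k. lam i * E)"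
        using ii unfolding E_def by (intro sum.cong) auto
      also have "\<dots> = E" using lam(2) by (simp add: sum_distrib_right[symmetric])
      also have "\<dots> \<le> (\<Sum>i<k. lam i * norm (f (as i) (xs i) - g (xs i)))"
      proof -
        have "0 \<le> (\<Sum>i<k. lam i * U (ts i) v)" using ineq v by blast
        also have "\<dots> = (\<Sum>i<k. lam i * norm (f (as i) (xs i) - g (xs i))) - (\<Sum>i<k. lam i * E)"
          by (simp add: Ui right_diff_distrib sum_subtractf)
        also have "(\<Sum>i<k. lam i * E) = E" using lam(2) by (simp add: sum_distrib_right[symmetric])
        finally show ?thesis by simp
      qed
      finally show ?thesis .
    qed
    show ?rhs
      using k lam ii i by (intro exI[of _ k] conjI exI[of _ as] exI[of _ xs] exI[of _ lam]) auto
  next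
    assume "\<exists>k::nat. 1 \<le> k \<and> k \<le> n + 1 \<and>
      (\<exists>(as :: nat \<Rightarrow> 'a) (xs :: nat \<Rightarrow> 'x) (lam :: nat \<Rightarrow> real).
        (\<forall>i<k. lam i > 0) \<and> (\<Sum>i<k. lam i) = 1 \<and>
        (\<forall>g\<in>H. (\<Sum>i<k. lam i * norm (f (as i) (xs i) - fs (xs i)))
                \<le> (\<Sum>i<k. lam i * norm (f (as i) (xs i) - g (xs i)))) \<and>
        (\<forall>i<k. norm (f (as i) (xs i) - fs (xs i)) = norm (f (as i) - fs) \<and>
               norm (f (as i) - fs) = (SUP a. norm (f a - fs))))"
    then show "\<forall>g\<in>H. (SUP a. norm (f a - fs)) \<le> (SUP a. norm (f a - g))"
    proof (elim exE conjE)
      fix k as xs lam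
      assume "1 \<le> k" "k \<le> n + 1" and lam1: "\<forall>i<k. 0 < (lam::nat\<Rightarrow>real) i" and lam2: "(\<Sum>i<k. lam i) = 1"
       and i: "\<forall>g\<in>H. (\<Sum>i<k. lam i * norm (f (as i) (xs i) - fs (xs i)))
                \<le> (\<Sum>i<k. lam i * norm (f (as i) (xs i) - g (xs i)))"
       and ii: "\<forall>i<k. norm (f (as i) (xs i) - fs (xs i)) = norm (f (as i) - fs) \<and>
               norm (f (as i) - fs) = (SUP a. norm (f a - fs))"
      note lam = lam1 lam2
    show "\<forall>g\<in>H. (SUP a. norm (f a - fs)) \<le> (SUP a. norm (f a - g))"
    proof
      fix g assume g: "g \<in> H"
      have "(SUP a. norm (f a - fs)) = (\<Sum>i<k. lam i * (SUP a. norm (f a - fs)))"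
        using lam(2) by (simp add: sum_distrib_right[symmetric])
      also have "\<dots> = (\<Sum>i<k. lam i * norm (f (as i) (xs i) - fs (xs i)))"
        using ii by (intro sum.cong) auto
      also have "\<dots> \<le> (\<Sum>i<k. lam i * norm (f (as i) (xs i) - g (xs i)))" using i g by blast
      also have "\<dots> \<le> (\<Sum>i<k. lam i * (SUP a. norm (f a - g)))"
      proof (rule sum_mono)
        fix i assume "i \<in> {..<k}"
        have "norm (f (as i) (xs i) - g (xs i)) \<le> norm (f (as i) - g)"
          using norm_bounded[of "f (as i) - g" "xs i"] by simp
        also have "\<dots> \<le> (SUP a. norm (f a - g))" by (rule supg)
        finally show "lam i * norm (f (as i) (xs i) - g (xs i)) \<le> lam i * (SUP a. norm (f a - g))"
          using lam(1) \<open>i \<in> {..<k}\<close> by (intro mult_left_mono) auto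
      qed
      also have "\<dots> = (SUP a. norm (f a - g))"
        using lam(2) by (simp add: sum_distrib_right[symmetric])
      finally show "(SUP a. norm (f a - fs)) \<le> (SUP a. norm (f a - g))" .
    qed
    qed
  qed
qed


end
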